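(* If $\mathcal{C}$ is a properly-splitted hypergraph, then $\psi(\mathcal{C})=\operatorname{conn_h}(\operatorname{Ind}(\mathcal{C}))+2$.
   Context: A hypergraph $\mathcal{C}$ on a finite vertex set $V$ is a family of pairwise incomparable subsets of $V$ (its edges), each of cardinality at least $2$; vertices lying in no edge are allowed. The independence complex $\operatorname{Ind}(\mathcal{C})$ is the simplicial complex on $V$ whose faces are the subsets of $V$ containing no edge of $\mathcal{C}$ (if $V=\emptyset$ it is $\{\emptyset\}$). For an edge $F$: $\mathcal{C}-F$ is the hypergraph on $V$ with edge set $\mathcal{C}\setminus\{F\}$; $N_{\mathcal{C}}(F)=\bigcup\{E\setminus F : E\in\mathcal{C},\ |E\setminus F|=1\}$; and $\mathcal{C}:F$ is the hypergraph on $V\setminus(F\cup N_{\mathcal{C}}(F))$ whose edges are the members of cardinality at least $2$ among the inclusion-minimal members of the family $\{E\setminus F : E\in \mathcal{C}-F\}$. The number $\psi(\mathcal{C})\in\mathbb{Z}_{\ge 0}\cup\{\infty\}$ is defined recursively: $\psi(\mathcal{C})=0$ if $V=\emptyset$; $\psi(\mathcal{C})=\infty$ if $V\neq\emptyset$ and $\mathcal{C}$ has no edges; otherwise $\psi(\mathcal{C})=\max_{F\in\mathcal{C}}\min\{\psi(\mathcal{C}-F),\ \psi(\mathcal{C}:F)+|F|-1\}$. The homological connectivity $\operatorname{conn_h}(\Delta)$ is the largest integer $k$ such that $\tilde H_i(\Delta;\mathbb{Z})=0$ for all $i\le k$ ($\infty$ if all vanish; $\operatorname{conn_h}(\{\emptyset\})=-2$).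 A hypergraph $\mathcal{C}$ is properly-splitted (recursively on the number of edges) if either $\mathcal{C}$ has no edges, or $\mathcal{C}$ has an edge $F$ with $\operatorname{conn_h}(\operatorname{Ind}(\mathcal{C}:F))\ge \operatorname{conn_h}(\operatorname{Ind}(\mathcal{C}))-|F|+1$ such that both $\mathcal{C}-F$ and $\mathcal{C}:F$ are properly-splitted. *)

theory Defs
  imports Main "HOL-Library.Extended_Real"
begin

definition hypergraph :: "'a set \<Rightarrow> 'a set set \<Rightarrow> bool" where
  "hypergraph V C \<longleftrightarrow> finite V \<and> (\<forall>E\<in>C. E \<subseteq> V \<and> card E \<ge> 2) \<and>
     (\<forall>E\<in>C. \<forall>E'\<in>C. E \<subseteq> E' \<longrightarrow> E = E')"

definition Ind :: "'a set \<Rightarrow> 'a set set \<Rightarrow> 'a set set" where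
  "Ind V C = {S. S \<subseteq> V \<and> \<not> (\<exists>E\<in>C. E \<subseteq> S)}"

definition nbhd :: "'a set set \<Rightarrow> 'a set \<Rightarrow> 'a set" where
  "nbhd C F = \<Union>{E - F | E. E \<in> C \<and> card (E - F) = 1}"

definition colon_V :: "'a set \<Rightarrow> 'a set set \<Rightarrow> 'a set \<Rightarrow> 'a set" where
  "colon_V V C F = V - (F \<union> nbhd C F)"

definition colon_E :: "'a set set \<Rightarrow> 'a set \<Rightarrow> 'a set set" where
  "colon_E C F = (let M = {E - F | E. E \<in> C - {F}} in
     {G. G \<in> M \<and> \<not> (\<exists>H\<in>M. H \<subset> G) \<and> card G \<ge> 2})"

text \<open>psi, defined by recursion on the number of edges (fuel = number of edges;
  both recursive calls have strictly fewer edges).\<close>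
fun psi_aux :: "nat \<Rightarrow> 'a set \<Rightarrow> 'a set set \<Rightarrow> ereal" where
  "psi_aux 0 V C = (if V = {} then 0 else \<infinity>)"
| "psi_aux (Suc n) V C =
    (if V = {} then 0 else if C = {} then \<infinity> else
     Max ((\<lambda>F. min (psi_aux n V (C - {F}))
                    (psi_aux n (colon_V V C F) (colon_E C F) + ereal (real (card F) - 1))) ` C))"

definition psi :: "'a set \<Rightarrow> 'a set set \<Rightarrow> ereal" where
  "psi V C = psi_aux (card C) V C"

text \<open>Augmented oriented simplicial chain complex of a complex \<Delta> (a family of
  finite subsets of a linearly ordered vertex type); a k-chain is an integer
  function supported on faces of cardinality k+1 (the empty face in degree -1).\<close>

definition is_chain :: "'a set set \<Rightarrow> int \<Rightarrow> ('a set \<Rightarrow> int) \<Rightarrow> bool" where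
  "is_chain \<Delta> k c \<longleftrightarrow> (\<forall>\<sigma>. c \<sigma> \<noteq> 0 \<longrightarrow> \<sigma> \<in> \<Delta> \<and> int (card \<sigma>) = k + 1)"

definition bd :: "'a::linorder set set \<Rightarrow> ('a set \<Rightarrow> int) \<Rightarrow> 'a set \<Rightarrow> int" where
  "bd \<Delta> c \<tau> = (if \<tau> \<in> \<Delta> then
      (\<Sum>v\<in>(\<Union>\<Delta>) - \<tau>. (if insert v \<tau> \<in> \<Delta>
          then (-1) ^ card {u\<in>\<tau>. u < v} * c (insert v \<tau>) else 0))
     else 0)"

definition hom_vanishes :: "'a::linorder set set \<Rightarrow> int \<Rightarrow> bool" where
  "hom_vanishes \<Delta> i \<longleftrightarrow> (\<forall>c. is_chain \<Delta> i c \<and> bd \<Delta> c = (\<lambda>_. 0) \<longrightarrow>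
      (\<exists>d. is_chain \<Delta> (i + 1) d \<and> bd \<Delta> d = c))"

definition conn_h :: "'a::linorder set set \<Rightarrow> ereal" where
  "conn_h \<Delta> = (if \<forall>i. hom_vanishes \<Delta> i then \<infinity>
     else ereal (of_int (GREATEST k. \<forall>i\<le>k. hom_vanishes \<Delta> i)))"

inductive properly_splitted :: "'a::linorder set \<Rightarrow> 'a set set \<Rightarrow> bool" where
  empty: "properly_splitted V {}"
| split: "F \<in> C \<Longrightarrow>
    conn_h (Ind (colon_V V C F) (colon_E C F)) \<ge> conn_h (Ind V C) - ereal (real (card F)) + 1 \<Longrightarrow>
    properly_splitted V (C - {F}) \<Longrightarrow>
    properly_splitted (colon_V V C F) (colon_E C F) \<Longrightarrow>
    properly_splitted V C"

end

theory Submission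
  imports Defs
begin

definition e :: "'a::linorder set \<Rightarrow> 'a \<Rightarrow> int" where
  "e \<tau> v = (-1) ^ card {u\<in>\<tau>. u < v}"

lemma e_sq: "e \<tau> v * e \<tau> v = 1"
  unfolding e_def by simp

lemma card_lt_insert:
  assumes "finite \<tau>" "x \<notin> \<tau>"
  shows "card {u\<in>insert x \<tau>. u < v} = card {u\<in>\<tau>. u < v} + (if x < v then 1 else 0)"
proof -
  have fin: "finite {u\<in>\<tau>. u < v}" using assms by simp
  show ?thesis
  proof (cases "x < v")
    case True
    then have "{u\<in>insert x \<tau>. u < v} = insert x {u\<in>\<tau>. u < v}" by auto
    then show ?thesis using True fin assms by simp
  next
    case False
    then have "{u\<in>insert x \<tau>. u < v} = {u\<in>\<tau>. u < v}" by auto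
    then show ?thesis using False by simp
  qed
qed

lemma e_insert:
  assumes "finite \<tau>" "x \<notin> \<tau>"
  shows "e (insert x \<tau>) v = (if x < v then - e \<tau> v else e \<tau> v)"
  unfolding e_def using card_lt_insert[OF assms, of v] by auto

lemma e_swap:
  assumes "finite \<rho>" "v \<noteq> w" "v \<notin> \<rho>" "w \<notin> \<rho>"
  shows "e \<rho> v * e (insert v \<rho>) w = - (e \<rho> w * e (insert w \<rho>) v)"
  using e_insert[OF assms(1) assms(3), of w] e_insert[OF assms(1) assms(4), of v] assms(2)
  by (cases "v < w") auto

lemma e_union:
  assumes "finite F" "finite \<tau>" "F \<inter> \<tau> = {}"
  shows "e (F \<union> \<tau>) v = e F v * e \<tau> v"
proof -
  have "{u\<in>F \<union> \<tau>. u < v} = {u\<in>F. u < v} \<union> {u\<in>\<tau>. u < v}" by auto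
  moreover have "card ({u\<in>F. u < v} \<union> {u\<in>\<tau>. u < v}) = card {u\<in>F. u < v} + card {u\<in>\<tau>. u < v}"
    by (rule card_Un_disjoint) (use assms in auto)
  ultimately show ?thesis unfolding e_def by (simp add: power_add)
qed

lemma bd_e: "bd \<Delta> c \<tau> = (if \<tau> \<in> \<Delta> then
      (\<Sum>v\<in>(\<Union>\<Delta>) - \<tau>. (if insert v \<tau> \<in> \<Delta> then e \<tau> v * c (insert v \<tau>) else 0)) else 0)"
  unfolding bd_def e_def by simp

lemma bd_alt:
  assumes "finite W" "\<Union>\<Delta> \<subseteq> W"
  shows "bd \<Delta> c \<tau> = (if \<tau> \<in> \<Delta> then
      (\<Sum>v\<in>W - \<tau>. (if insert v \<tau> \<in> \<Delta> then e \<tau> v * c (insert v \<tau>) else 0)) else 0)"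
proof -
  have "(\<Sum>v\<in>(\<Union>\<Delta>) - \<tau>. (if insert v \<tau> \<in> \<Delta> then e \<tau> v * c (insert v \<tau>) else 0))
      = (\<Sum>v\<in>W - \<tau>. (if insert v \<tau> \<in> \<Delta> then e \<tau> v * c (insert v \<tau>) else 0))"
    by (rule sum.mono_neutral_left) (use assms in auto)
  then show ?thesis unfolding bd_e by simp
qed

lemma bd_diff: "bd \<Delta> (\<lambda>s. c s - d s) = (\<lambda>s. bd \<Delta> c s - bd \<Delta> d s)"
proof
  fix \<tau>
  have "(\<Sum>v\<in>(\<Union>\<Delta>) - \<tau>. (if insert v \<tau> \<in> \<Delta> then e \<tau> v * (c (insert v \<tau>) - d (insert v \<tau>)) else 0))
    = (\<Sum>v\<in>(\<Union>\<Delta>) - \<tau>. (if insert v \<tau> \<in> \<Delta> then e \<tau> v * c (insert v \<tau>) else 0) - (if insert v \<tau> \<in> \<Delta> then e \<tau> v * d (insert v \<tau>) else 0))"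
    by (intro sum.cong refl) (simp add: algebra_simps)
  then show "bd \<Delta> (\<lambda>s. c s - d s) \<tau> = bd \<Delta> c \<tau> - bd \<Delta> d \<tau>"
    unfolding bd_e by (simp add: sum_subtractf)
qed

lemma bd_add: "bd \<Delta> (\<lambda>s. c s + d s) = (\<lambda>s. bd \<Delta> c s + bd \<Delta> d s)"
proof
  fix \<tau>
  have "(\<Sum>v\<in>(\<Union>\<Delta>) - \<tau>. (if insert v \<tau> \<in> \<Delta> then e \<tau> v * (c (insert v \<tau>) + d (insert v \<tau>)) else 0))
    = (\<Sum>v\<in>(\<Union>\<Delta>) - \<tau>. (if insert v \<tau> \<in> \<Delta> then e \<tau> v * c (insert v \<tau>) else 0) + (if insert v \<tau> \<in> \<Delta> then e \<tau> v * d (insert v \<tau>) else 0))"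
    by (intro sum.cong refl) (simp add: algebra_simps)
  then show "bd \<Delta> (\<lambda>s. c s + d s) \<tau> = bd \<Delta> c \<tau> + bd \<Delta> d \<tau>"
    unfolding bd_e by (simp add: sum.distrib)
qed

lemma bd_zero: "bd \<Delta> (\<lambda>_. 0) = (\<lambda>_. 0)"
  unfolding bd_e by (auto simp: fun_eq_iff intro!: sum.neutral)

lemma bd_chain:
  assumes "\<forall>\<sigma>\<in>\<Delta>. finite \<sigma>" "is_chain \<Delta> (i + 1) d"
  shows "is_chain \<Delta> i (bd \<Delta> d)"
  unfolding is_chain_def
proof (intro allI impI)
  fix \<tau> assume nz: "bd \<Delta> d \<tau> \<noteq> 0"
  have t: "\<tau> \<in> \<Delta>" proof (rule ccontr)
    assume "\<tau> \<notin> \<Delta>"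
    then have "bd \<Delta> d \<tau> = 0" unfolding bd_e by simp
    then show False using nz by simp
  qed
  have "(\<Sum>v\<in>(\<Union>\<Delta>) - \<tau>. (if insert v \<tau> \<in> \<Delta> then e \<tau> v * d (insert v \<tau>) else 0)) \<noteq> 0"
    using nz t unfolding bd_e by simp
  then obtain v where "v \<in> \<Union>\<Delta> - \<tau>" "(if insert v \<tau> \<in> \<Delta> then e \<tau> v * d (insert v \<tau>) else 0) \<noteq> 0"
    by (rule sum.not_neutral_contains_not_neutral)
  then have v: "v \<notin> \<tau>" "d (insert v \<tau>) \<noteq> 0" by (auto split: if_splits)
  then have "int (card (insert v \<tau>)) = i + 1 + 1" using assms(2) unfolding is_chain_def by blast
  moreover have "finite \<tau>" using assms(1) t by auto
  ultimately show "\<tau> \<in> \<Delta> \<and> int (card \<tau>) = i + 1" using t v by simp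
qed

definition downclosed :: "'a set set \<Rightarrow> bool" where
  "downclosed \<Delta> \<longleftrightarrow> (\<forall>\<sigma>\<in>\<Delta>. \<forall>\<rho>. \<rho> \<subseteq> \<sigma> \<longrightarrow> \<rho> \<in> \<Delta>)"

lemma antisym_sum_zero:
  fixes h :: "'b \<Rightarrow> 'b \<Rightarrow> int"
  assumes "\<And>v w. v \<in> X \<Longrightarrow> w \<in> X \<Longrightarrow> v \<noteq> w \<Longrightarrow> h w v = - h v w"
  shows "(\<Sum>v\<in>X. \<Sum>w\<in>X. if v = w then 0 else h v w) = 0"
proof -
  let ?S = "(\<Sum>v\<in>X. \<Sum>w\<in>X. if v = w then 0 else h v w)"
  have "?S = (\<Sum>w\<in>X. \<Sum>v\<in>X. if v = w then 0 else h v w)" by (rule sum.swap)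
  also have "\<dots> = (\<Sum>w\<in>X. \<Sum>v\<in>X. - (if w = v then 0 else h w v))"
  proof (intro sum.cong refl)
    fix w v assume "w \<in> X" "v \<in> X"
    then show "(if v = w then 0 else h v w) = - (if w = v then 0 else h w v)"
      using assms[of w v] by (cases "v = w") simp_all
  qed
  also have "\<dots> = - ?S" by (simp add: sum_negf)
  finally show ?thesis by simp
qed

lemma bd_bd:
  assumes fW: "finite W" and W: "\<Union>\<Delta> \<subseteq> W" and dc: "downclosed \<Delta>"
    and fin: "\<forall>\<sigma>\<in>\<Delta>. finite \<sigma>"
    and supp: "\<And>\<sigma>. g \<sigma> \<noteq> 0 \<Longrightarrow> \<sigma> \<in> \<Delta>"
  shows "bd \<Delta> (bd \<Delta> g) \<rho> = 0"
proof (cases "\<rho> \<in> \<Delta>")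
  case False then show ?thesis unfolding bd_e by simp
next
  case True
  have fr: "finite \<rho>" using fin True by auto
  let ?h = "\<lambda>v w. e \<rho> v * e (insert v \<rho>) w * g (insert w (insert v \<rho>))"
  have "bd \<Delta> (bd \<Delta> g) \<rho> = (\<Sum>v\<in>W - \<rho>. (if insert v \<rho> \<in> \<Delta> then e \<rho> v *
      (\<Sum>w\<in>W - insert v \<rho>. (if insert w (insert v \<rho>) \<in> \<Delta> then e (insert v \<rho>) w * g (insert w (insert v \<rho>)) else 0)) else 0))"
    unfolding bd_alt[OF fW W] using True by (auto intro!: sum.cong)
  also have "\<dots> = (\<Sum>v\<in>W - \<rho>. \<Sum>w\<in>W - \<rho>. if v = w then 0 else ?h v w)"
  proof (intro sum.cong refl)
    fix v assume v: "v \<in> W - \<rho>"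
    show "(if insert v \<rho> \<in> \<Delta> then e \<rho> v *
      (\<Sum>w\<in>W - insert v \<rho>. (if insert w (insert v \<rho>) \<in> \<Delta> then e (insert v \<rho>) w * g (insert w (insert v \<rho>)) else 0)) else 0)
      = (\<Sum>w\<in>W - \<rho>. if v = w then 0 else ?h v w)"
    proof (cases "insert v \<rho> \<in> \<Delta>")
      case True
      have "(\<Sum>w\<in>W - \<rho>. if v = w then 0 else ?h v w) = (\<Sum>w\<in>W - insert v \<rho>. ?h v w)"
        by (rule sum.mono_neutral_cong_right) (use fW v in auto)
      also have "\<dots> = e \<rho> v * (\<Sum>w\<in>W - insert v \<rho>. (if insert w (insert v \<rho>) \<in> \<Delta> then e (insert v \<rho>) w * g (insert w (insert v \<rho>)) else 0))"
        unfolding sum_distrib_left using supp by (intro sum.cong refl) (auto simp: mult.assoc)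
      finally show ?thesis using True by simp
    next
      case False
      have "?h v w = 0" for w
      proof -
        have "insert w (insert v \<rho>) \<notin> \<Delta>" using False dc unfolding downclosed_def by blast
        then show ?thesis using supp by fastforce
      qed
      then show ?thesis using False by (simp add: sum.neutral)
    qed
  qed
  also have "\<dots> = 0"
  proof (rule antisym_sum_zero)
    fix v w assume "v \<in> W - \<rho>" "w \<in> W - \<rho>" "v \<noteq> w"
    then show "?h w v = - ?h v w" using e_swap[OF fr, of v w] by (simp add: insert_commute)
  qed
  finally show ?thesis .
qed

lemma bdP:
  assumes "finite V" "\<rho> \<subseteq> V"
  shows "bd {S. S \<subseteq> V} h \<rho> = (\<Sum>w\<in>V - \<rho>. e \<rho> w * h (insert w \<rho>))"
proof -
  have "bd {S. S \<subseteq> V} h \<rho> = (\<Sum>w\<in>V - \<rho>. (if insert w \<rho> \<in> {S. S \<subseteq> V} then e \<rho> w * h (insert w \<rho>) else 0))"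
    using bd_alt[of V "{S. S \<subseteq> V}" h \<rho>] assms by auto
  also have "\<dots> = (\<Sum>w\<in>V - \<rho>. e \<rho> w * h (insert w \<rho>))"
    using assms by (intro sum.cong refl) auto
  finally show ?thesis .
qed

definition cone :: "'a::linorder \<Rightarrow> ('a set \<Rightarrow> int) \<Rightarrow> 'a set \<Rightarrow> int" where
  "cone v g \<sigma> = (if v \<in> \<sigma> then e (\<sigma> - {v}) v * g (\<sigma> - {v}) else 0)"

lemma cone_id:
  assumes fV: "finite V" and vV: "v \<in> V" and rV: "\<rho> \<subseteq> V"
  shows "bd {S. S \<subseteq> V} (cone v g) \<rho> + cone v (bd {S. S \<subseteq> V} g) \<rho> = g \<rho>"
proof (cases "v \<in> \<rho>")
  case False
  have "bd {S. S \<subseteq> V} (cone v g) \<rho> = (\<Sum>w\<in>V - \<rho>. e \<rho> w * cone v g (insert w \<rho>))"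
    by (rule bdP[OF fV rV])
  also have "\<dots> = e \<rho> v * cone v g (insert v \<rho>) + (\<Sum>w\<in>(V - \<rho>) - {v}. e \<rho> w * cone v g (insert w \<rho>))"
    by (rule sum.remove) (use fV vV False in auto)
  also have "(\<Sum>w\<in>(V - \<rho>) - {v}. e \<rho> w * cone v g (insert w \<rho>)) = 0"
    using False by (intro sum.neutral) (auto simp: cone_def)
  also have "e \<rho> v * cone v g (insert v \<rho>) = g \<rho>"
    using False by (simp add: cone_def mult.assoc[symmetric] e_sq)
  finally have "bd {S. S \<subseteq> V} (cone v g) \<rho> = g \<rho>" by simp
  moreover have "cone v (bd {S. S \<subseteq> V} g) \<rho> = 0" using False by (simp add: cone_def)
  ultimately show ?thesis by simp
next
  case True
  define r where "r = \<rho> - {v}"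
  have rho: "\<rho> = insert v r" and vr: "v \<notin> r" using True unfolding r_def by auto
  have fr: "finite r" using rV fV unfolding r_def by (auto intro: finite_subset)
  have rV': "r \<subseteq> V" using rV unfolding r_def by auto
  have "bd {S. S \<subseteq> V} (cone v g) \<rho> = (\<Sum>w\<in>V - \<rho>. e \<rho> w * cone v g (insert w \<rho>))"
    by (rule bdP[OF fV rV])
  also have "\<dots> = (\<Sum>w\<in>V - \<rho>. e \<rho> w * e (insert w r) v * g (insert w r))"
  proof (intro sum.cong refl)
    fix w assume "w \<in> V - \<rho>"
    then have "insert w \<rho> - {v} = insert w r" "w \<noteq> v" using rho vr by auto
    then show "e \<rho> w * cone v g (insert w \<rho>) = e \<rho> w * e (insert w r) v * g (insert w r)"
      using True by (simp add: cone_def)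
  qed
  finally have A: "bd {S. S \<subseteq> V} (cone v g) \<rho> = (\<Sum>w\<in>V - \<rho>. e \<rho> w * e (insert w r) v * g (insert w r))" .
  have "cone v (bd {S. S \<subseteq> V} g) \<rho> = e r v * bd {S. S \<subseteq> V} g r"
    using True unfolding cone_def r_def by simp
  also have "\<dots> = e r v * (\<Sum>w\<in>V - r. e r w * g (insert w r))"
    by (simp add: bdP[OF fV rV'])
  also have "V - r = insert v (V - \<rho>)" using rho vV vr by auto
  also have "e r v * (\<Sum>w\<in>insert v (V - \<rho>). e r w * g (insert w r))
      = e r v * (e r v * g \<rho> + (\<Sum>w\<in>V - \<rho>. e r w * g (insert w r)))"
  proof -
    have f1: "finite (V - \<rho>)" using fV by simp
    have v1: "v \<notin> V - \<rho>" using True by simp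
    show ?thesis by (subst sum.insert[OF f1 v1]) (simp add: rho[symmetric])
  qed
  also have "\<dots> = g \<rho> + (\<Sum>w\<in>V - \<rho>. e r v * e r w * g (insert w r))"
  proof -
    have "e r v * (e r v * g \<rho>) = g \<rho>" using e_sq[of r v] by (simp add: mult.assoc[symmetric])
    then show ?thesis by (simp add: distrib_left sum_distrib_left mult.assoc)
  qed
  finally have B: "cone v (bd {S. S \<subseteq> V} g) \<rho> = g \<rho> + (\<Sum>w\<in>V - \<rho>. e r v * e r w * g (insert w r))" .
  have C: "(\<Sum>w\<in>V - \<rho>. e \<rho> w * e (insert w r) v * g (insert w r)) + (\<Sum>w\<in>V - \<rho>. e r v * e r w * g (insert w r)) = 0"
    unfolding sum.distrib[symmetric]
  proof (intro sum.neutral ballI)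
    fix w assume w: "w \<in> V - \<rho>"
    then have wr: "w \<notin> r" "w \<noteq> v" using rho by auto
    have "e \<rho> w * e (insert w r) v = - (e r v * e r w)"
      unfolding rho using e_insert[OF fr vr, of w] e_insert[OF fr wr(1), of v] wr(2)
      by (cases "v < w") auto
    then show "e \<rho> w * e (insert w r) v * g (insert w r) + e r v * e r w * g (insert w r) = 0"
      by (simp add: algebra_simps)
  qed
  show ?thesis using A B C by simp
qed

lemma simplex_vanishes:
  assumes fV: "finite V" and vV: "v \<in> V"
  shows "hom_vanishes {S. S \<subseteq> V} i"
  unfolding hom_vanishes_def
proof (intro allI impI)
  fix c assume c: "is_chain {S. S \<subseteq> V} i c \<and> bd {S. S \<subseteq> V} c = (\<lambda>_. 0)"
  have ch: "is_chain {S. S \<subseteq> V} (i + 1) (cone v c)"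
    unfolding is_chain_def
  proof (intro allI impI)
    fix \<sigma> assume nz: "cone v c \<sigma> \<noteq> 0"
    have vs: "v \<in> \<sigma>" using nz unfolding cone_def by (cases "v \<in> \<sigma>") simp_all
    have cz: "c (\<sigma> - {v}) \<noteq> 0" using nz vs unfolding cone_def by simp
    have c1: "\<sigma> - {v} \<in> {S. S \<subseteq> V} \<and> int (card (\<sigma> - {v})) = i + 1"
      using c cz unfolding is_chain_def by blast
    have sV: "\<sigma> \<subseteq> V" using c1 vV by blast
    have fs: "finite \<sigma>" using sV fV by (rule finite_subset)
    have "Suc (card (\<sigma> - {v})) = card \<sigma>" using card_Suc_Diff1[OF fs vs] .
    then have "int (card \<sigma>) = i + 1 + 1" using c1 by linarith
    then show "\<sigma> \<in> {S. S \<subseteq> V} \<and> int (card \<sigma>) = i + 1 + 1" using sV by simp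
  qed
  have "bd {S. S \<subseteq> V} (cone v c) = c"
  proof
    fix \<rho>
    show "bd {S. S \<subseteq> V} (cone v c) \<rho> = c \<rho>"
    proof (cases "\<rho> \<subseteq> V")
      case True
      have "cone v (bd {S. S \<subseteq> V} c) \<rho> = 0" using c by (simp add: cone_def)
      then show ?thesis using cone_id[OF fV vV True, of c] by simp
    next
      case False
      then have "c \<rho> = 0" using c unfolding is_chain_def by auto
      then show ?thesis using False by (simp add: bd_e)
    qed
  qed
  then show "\<exists>d. is_chain {S. S \<subseteq> V} (i + 1) d \<and> bd {S. S \<subseteq> V} d = c" using ch by blast
qed

lemma vanish_low:
  assumes "i \<le> -2"
  shows "hom_vanishes \<Delta> i"
  unfolding hom_vanishes_def
proof (intro allI impI)
  fix c assume c: "is_chain \<Delta> i c \<and> bd \<Delta> c = (\<lambda>_. 0)"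
  have "c = (\<lambda>_. 0)"
  proof
    fix \<sigma> show "c \<sigma> = 0"
    proof (rule ccontr)
      assume "c \<sigma> \<noteq> 0"
      then have "int (card \<sigma>) = i + 1" using c unfolding is_chain_def by blast
      then show False using assms by linarith
    qed
  qed
  moreover have "is_chain \<Delta> (i + 1) (\<lambda>_. 0)" unfolding is_chain_def by simp
  moreover have "bd \<Delta> (\<lambda>_. 0) = (\<lambda>_. 0)" by (rule bd_zero)
  ultimately show "\<exists>d. is_chain \<Delta> (i + 1) d \<and> bd \<Delta> d = c" by auto
qed

lemma conn_eq:
  assumes "\<forall>j\<le>m. hom_vanishes \<Delta> j" "\<not> hom_vanishes \<Delta> (m + 1)"
  shows "conn_h \<Delta> = ereal (real_of_int m)"
proof -
  have "(GREATEST k. \<forall>i\<le>k. hom_vanishes \<Delta> i) = m"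
  proof (rule Greatest_equality)
    show "\<forall>i\<le>m. hom_vanishes \<Delta> i" using assms(1) by blast
    fix y assume "\<forall>i\<le>y. hom_vanishes \<Delta> i"
    then show "y \<le> m" using assms(2) by (meson not_le zless_imp_add1_zle)
  qed
  then show ?thesis unfolding conn_h_def using assms(2) by auto
qed

lemma conn_lt:
  assumes nv: "\<not> hom_vanishes \<Delta> j0"
  shows "\<exists>m::int. conn_h \<Delta> = ereal (real_of_int m) \<and> m < j0 \<and> (\<forall>j\<le>m. hom_vanishes \<Delta> j) \<and> \<not> hom_vanishes \<Delta> (m + 1)"
proof -
  let ?P = "\<lambda>k. \<forall>i\<le>k. hom_vanishes \<Delta> (i::int)"
  have Pj: "?P k \<Longrightarrow> k < j0" for k using nv by (meson not_le)
  have P2: "?P (-2)" using vanish_low by blast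
  define S where "S = {k\<in>{-2..j0}. ?P k}"
  have fS: "finite S" unfolding S_def by (rule finite_subset[of _ "{-2..j0}"]) auto
  have neS: "-2 \<in> S" unfolding S_def using P2 Pj[OF P2] by simp
  define g where "g = Max S"
  have gS: "g \<in> S" unfolding g_def using fS neS by (intro Max_in) auto
  then have Pg: "?P g" unfolding S_def by simp
  have nP: "\<not> ?P (g + 1)"
  proof
    assume h: "?P (g + 1)"
    then have "g + 1 \<in> S" unfolding S_def using Pj[OF h] gS unfolding S_def by auto
    then have "g + 1 \<le> g" unfolding g_def using fS Max_ge by blast
    then show False by simp
  qed
  have nv1: "\<not> hom_vanishes \<Delta> (g + 1)"
  proof
    assume h: "hom_vanishes \<Delta> (g + 1)"
    have "?P (g + 1)"
    proof (intro allI impI)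
      fix i assume "i \<le> g + 1"
      then have "i \<le> g \<or> i = g + 1" by linarith
      then show "hom_vanishes \<Delta> i" using Pg h by blast
    qed
    then show False using nP by blast
  qed
  show ?thesis using conn_eq[OF Pg nv1] Pj[OF Pg] Pg nv1 by blast
qed

lemma conn_inf:
  assumes "\<forall>i. hom_vanishes \<Delta> i"
  shows "conn_h \<Delta> = \<infinity>"
  using assms unfolding conn_h_def by simp

lemma conn_ge:
  assumes "ereal (real_of_int i) \<le> conn_h \<Delta>" "j \<le> i"
  shows "hom_vanishes \<Delta> j"
proof (rule ccontr)
  assume "\<not> hom_vanishes \<Delta> j"
  then obtain m where m: "conn_h \<Delta> = ereal (real_of_int m)" "m < j" using conn_lt by blast
  then show False using assms by auto
qed

lemma conn_cases:
  "conn_h \<Delta> = \<infinity> \<or> (\<exists>m::int. conn_h \<Delta> = ereal (real_of_int m))"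
  using conn_lt conn_inf by blast

lemma chain_diff: "is_chain \<Delta> k c \<Longrightarrow> is_chain \<Delta> k d \<Longrightarrow> is_chain \<Delta> k (\<lambda>s. c s - d s)"
  unfolding is_chain_def by (metis diff_self)

lemma chain_add: "is_chain \<Delta> k c \<Longrightarrow> is_chain \<Delta> k d \<Longrightarrow> is_chain \<Delta> k (\<lambda>s. c s + d s)"
  unfolding is_chain_def by (metis add.right_neutral)

lemma chain_mono: "A \<subseteq> B \<Longrightarrow> is_chain A k c \<Longrightarrow> is_chain B k c"
  unfolding is_chain_def by blast

lemma chain_restrict: "is_chain B k c \<Longrightarrow> (\<And>\<sigma>. c \<sigma> \<noteq> 0 \<Longrightarrow> \<sigma> \<in> A) \<Longrightarrow> is_chain A k c"
  unfolding is_chain_def by blast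

locale splitting =
  fixes A B L :: "'a::linorder set set" and F V W :: "'a set"
  assumes fV: "finite V" and FV: "F \<subseteq> V" and BV: "\<Union>B \<subseteq> V" and LW: "\<Union>L \<subseteq> W"
    and WV: "W \<subseteq> V - F"
    and A_eq: "A = {\<sigma>\<in>B. \<not> F \<subseteq> \<sigma>}"
    and dcB: "downclosed B"
    and char: "\<And>\<tau>. \<tau> \<inter> F = {} \<Longrightarrow> (F \<union> \<tau> \<in> B \<longleftrightarrow> \<tau> \<in> L)"
begin

lemma fF: "finite F" using fV FV by (rule finite_subset[rotated])
lemma fW: "finite W" using fV WV by (meson Diff_subset finite_subset)
lemma AB: "A \<subseteq> B" using A_eq by blast
lemma AV: "\<Union>A \<subseteq> V" using AB BV by blast
lemma finB: "\<forall>\<sigma>\<in>B. finite \<sigma>" using BV fV by (meson Union_upper finite_subset subset_trans)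
lemma finL: "\<forall>\<sigma>\<in>L. finite \<sigma>" using LW fW by (meson Union_upper finite_subset subset_trans)
lemma finA: "\<forall>\<sigma>\<in>A. finite \<sigma>" using finB AB by blast
lemma L_disj: "\<tau> \<in> L \<Longrightarrow> \<tau> \<inter> F = {}" using LW WV by blast
lemma fVF: "finite (V - F)" using fV by simp
lemma LVF: "\<Union>L \<subseteq> V - F" using LW WV by blast

definition s :: "'a set \<Rightarrow> int" where
  "s \<tau> = (-1) ^ (\<Sum>w\<in>\<tau>. card {u\<in>F. u < w})"

definition tl :: "('a set \<Rightarrow> int) \<Rightarrow> 'a set \<Rightarrow> int" where
  "tl g \<tau> = (if \<tau> \<inter> F = {} then s \<tau> * g (F \<union> \<tau>) else 0)"

definition Phi :: "('a set \<Rightarrow> int) \<Rightarrow> 'a set \<Rightarrow> int" where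
  "Phi w \<rho> = (if F \<subseteq> \<rho> then s (\<rho> - F) * w (\<rho> - F) else 0)"

lemma s_sq: "s \<tau> * s \<tau> = 1" unfolding s_def by simp

lemma s_insert: "finite \<tau> \<Longrightarrow> v \<notin> \<tau> \<Longrightarrow> s (insert v \<tau>) = e F v * s \<tau>"
  unfolding s_def e_def by (simp add: power_add)

lemma K:
  assumes tL: "\<tau> \<in> L"
  shows "bd B g (F \<union> \<tau>) = s \<tau> * bd L (tl g) \<tau>"
proof -
  have td: "\<tau> \<inter> F = {}" using L_disj[OF tL] .
  have FtB: "F \<union> \<tau> \<in> B" using char[OF td] tL by simp
  have ft: "finite \<tau>" using finL tL by blast
  have "bd B g (F \<union> \<tau>) = (\<Sum>v\<in>V - (F \<union> \<tau>). (if insert v (F \<union> \<tau>) \<in> B then e (F \<union> \<tau>) v * g (insert v (F \<union> \<tau>)) else 0))"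
    using bd_alt[OF fV BV, of g "F \<union> \<tau>"] FtB by simp
  also have "\<dots> = (\<Sum>v\<in>(V - F) - \<tau>. s \<tau> * (if insert v \<tau> \<in> L then e \<tau> v * tl g (insert v \<tau>) else 0))"
  proof (rule sum.cong)
    show "V - (F \<union> \<tau>) = V - F - \<tau>" by blast
  next
    fix v assume v: "v \<in> V - F - \<tau>"
    have ins: "insert v (F \<union> \<tau>) = F \<union> insert v \<tau>" by blast
    have d2: "insert v \<tau> \<inter> F = {}" using v td by blast
    have eq1: "e (F \<union> \<tau>) v = e F v * e \<tau> v" using e_union[OF fF ft] td by blast
    have eq2: "s (insert v \<tau>) = e F v * s \<tau>" using s_insert[OF ft] v by blast
    have eq3: "tl g (insert v \<tau>) = s (insert v \<tau>) * g (F \<union> insert v \<tau>)" using d2 unfolding tl_def by simp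
    have "s \<tau> * (e \<tau> v * (e F v * s \<tau> * g (F \<union> insert v \<tau>))) = (s \<tau> * s \<tau>) * (e F v * e \<tau> v * g (F \<union> insert v \<tau>))"
      by (simp only: ac_simps)
    also have "\<dots> = e F v * e \<tau> v * g (F \<union> insert v \<tau>)" by (simp add: s_sq)
    finally have key: "s \<tau> * (e \<tau> v * (e F v * s \<tau> * g (F \<union> insert v \<tau>))) = e F v * e \<tau> v * g (F \<union> insert v \<tau>)" .
    show "(if insert v (F \<union> \<tau>) \<in> B then e (F \<union> \<tau>) v * g (insert v (F \<union> \<tau>)) else 0) =
          s \<tau> * (if insert v \<tau> \<in> L then e \<tau> v * tl g (insert v \<tau>) else 0)"
    proof (cases "insert v \<tau> \<in> L")
      case True
      have Bin: "insert v (F \<union> \<tau>) \<in> B" unfolding ins using char[OF d2] True by blast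
      have "(if insert v (F \<union> \<tau>) \<in> B then e (F \<union> \<tau>) v * g (insert v (F \<union> \<tau>)) else 0)
          = e F v * e \<tau> v * g (F \<union> insert v \<tau>)"
        using Bin by (simp only: if_True eq1 ins)
      also have "\<dots> = s \<tau> * (e \<tau> v * (e F v * s \<tau> * g (F \<union> insert v \<tau>)))" by (simp only: key)
      also have "\<dots> = s \<tau> * (if insert v \<tau> \<in> L then e \<tau> v * tl g (insert v \<tau>) else 0)"
        by (simp only: True if_True eq3 eq2)
      finally show ?thesis .
    next
      case False
      have "insert v (F \<union> \<tau>) \<notin> B" unfolding ins using char[OF d2] False by blast
      then show ?thesis using False by simp
    qed
  qed
  also have "\<dots> = s \<tau> * bd L (tl g) \<tau>"
    using bd_alt[OF fVF LVF, of "tl g" \<tau>] tL by (simp add: sum_distrib_left)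
  finally show ?thesis .
qed

lemma R:
  assumes supp: "\<And>\<sigma>. g \<sigma> \<noteq> 0 \<Longrightarrow> \<sigma> \<in> A"
  shows "bd A g = bd B g"
proof
  fix \<rho>
  show "bd A g \<rho> = bd B g \<rho>"
  proof (cases "\<rho> \<in> A")
    case True
    then have rB: "\<rho> \<in> B" using AB by blast
    have "bd A g \<rho> = (\<Sum>v\<in>V - \<rho>. (if insert v \<rho> \<in> A then e \<rho> v * g (insert v \<rho>) else 0))"
      using bd_alt[OF fV AV, of g \<rho>] True by simp
    also have "\<dots> = (\<Sum>v\<in>V - \<rho>. (if insert v \<rho> \<in> B then e \<rho> v * g (insert v \<rho>) else 0))"
    proof (intro sum.cong refl)
      fix v
      show "(if insert v \<rho> \<in> A then e \<rho> v * g (insert v \<rho>) else 0) =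
            (if insert v \<rho> \<in> B then e \<rho> v * g (insert v \<rho>) else 0)"
      proof (cases "insert v \<rho> \<in> A")
        case True then show ?thesis using AB by auto
      next
        case False
        then have "g (insert v \<rho>) = 0" using supp by blast
        then show ?thesis using False by simp
      qed
    qed
    also have "\<dots> = bd B g \<rho>" using bd_alt[OF fV BV, of g \<rho>] rB by simp
    finally show ?thesis .
  next
    case False
    have l: "bd A g \<rho> = 0" using False unfolding bd_e by simp
    show ?thesis
    proof (cases "\<rho> \<in> B")
      case True
      then have "F \<subseteq> \<rho>" using False A_eq by blast
      then have "\<And>v. g (insert v \<rho>) = 0" using supp A_eq by blast
      then have "bd B g \<rho> = 0" unfolding bd_e by (simp add: sum.neutral)
      then show ?thesis using l by simp
    next
      case False
      then show ?thesis using l unfolding bd_e by simp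
    qed
  qed
qed

lemma tl_chain:
  assumes "is_chain B k c"
  shows "is_chain L (k - int (card F)) (tl c)"
  unfolding is_chain_def
proof (intro allI impI)
  fix \<tau> assume nz: "tl c \<tau> \<noteq> 0"
  then have td: "\<tau> \<inter> F = {}" unfolding tl_def by (cases "\<tau> \<inter> F = {}") auto
  then have cz: "c (F \<union> \<tau>) \<noteq> 0" using nz unfolding tl_def by simp
  then have h: "F \<union> \<tau> \<in> B" "int (card (F \<union> \<tau>)) = k + 1" using assms unfolding is_chain_def by blast+
  then have tL: "\<tau> \<in> L" using char[OF td] by simp
  have ft: "finite \<tau>" using finL tL by blast
  have "card (F \<union> \<tau>) = card F + card \<tau>" using card_Un_disjoint[OF fF ft] td by blast
  then show "\<tau> \<in> L \<and> int (card \<tau>) = k - int (card F) + 1" using tL h(2) by linarith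
qed

lemma Phi_chain:
  assumes "is_chain L k w"
  shows "is_chain B (k + int (card F)) (Phi w)"
  unfolding is_chain_def
proof (intro allI impI)
  fix \<rho> assume nz: "Phi w \<rho> \<noteq> 0"
  then have Fr: "F \<subseteq> \<rho>" unfolding Phi_def by (cases "F \<subseteq> \<rho>") auto
  then have wz: "w (\<rho> - F) \<noteq> 0" using nz unfolding Phi_def by simp
  then have h: "\<rho> - F \<in> L" "int (card (\<rho> - F)) = k + 1" using assms unfolding is_chain_def by blast+
  have rr: "\<rho> = F \<union> (\<rho> - F)" using Fr by blast
  have d: "(\<rho> - F) \<inter> F = {}" by blast
  have rB: "\<rho> \<in> B" using char[OF d] h(1) rr by simp
  have ft: "finite (\<rho> - F)" using finL h(1) by blast
  have "card \<rho> = card F + card (\<rho> - F)" using card_Un_disjoint[OF fF ft] d rr by (metis inf_commute)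
  then show "\<rho> \<in> B \<and> int (card \<rho>) = k + int (card F) + 1" using rB h(2) by linarith
qed

lemma tl_Phi:
  assumes "is_chain L k w"
  shows "tl (Phi w) = w"
proof
  fix \<tau>
  show "tl (Phi w) \<tau> = w \<tau>"
  proof (cases "\<tau> \<inter> F = {}")
    case True
    then have "(F \<union> \<tau>) - F = \<tau>" by blast
    then show ?thesis using True unfolding tl_def Phi_def by (simp add: mult.assoc[symmetric] s_sq)
  next
    case False
    then have "\<tau> \<notin> L" using L_disj by blast
    then have "w \<tau> = 0" using assms unfolding is_chain_def by blast
    then show ?thesis using False unfolding tl_def by simp
  qed
qed

lemma bdPhi_S:
  assumes w: "is_chain L k w" and bw: "bd L w = tl c" and c: "is_chain B j c" and Fr: "F \<subseteq> \<rho>"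
  shows "bd B (Phi w) \<rho> = c \<rho>"
proof -
  define \<tau> where "\<tau> = \<rho> - F"
  have rr: "\<rho> = F \<union> \<tau>" and td: "\<tau> \<inter> F = {}" using Fr unfolding \<tau>_def by blast+
  show ?thesis
  proof (cases "\<tau> \<in> L")
    case True
    have "bd B (Phi w) \<rho> = s \<tau> * bd L (tl (Phi w)) \<tau>" unfolding rr by (rule K[OF True])
    also have "\<dots> = s \<tau> * tl c \<tau>" using tl_Phi[OF w] bw by simp
    also have "\<dots> = c \<rho>" using td rr unfolding tl_def by (simp add: mult.assoc[symmetric] s_sq)
    finally show ?thesis .
  next
    case False
    then have "\<rho> \<notin> B" using char[OF td] rr by simp
    then show ?thesis using c unfolding is_chain_def bd_e by auto
  qed
qed

lemma bdbdB: "(\<And>\<sigma>. g \<sigma> \<noteq> 0 \<Longrightarrow> \<sigma> \<in> B) \<Longrightarrow> bd B (bd B g) = (\<lambda>_. 0)"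
  using bd_bd[OF fV BV dcB finB] by blast

lemma chain_supp: "is_chain \<Delta> k c \<Longrightarrow> c \<sigma> \<noteq> 0 \<Longrightarrow> \<sigma> \<in> \<Delta>"
  unfolding is_chain_def by blast

lemma H2:
  assumes hA: "hom_vanishes A i" and hL: "hom_vanishes L (i - int (card F))"
  shows "hom_vanishes B i"
  unfolding hom_vanishes_def
proof (intro allI impI)
  fix c assume c: "is_chain B i c \<and> bd B c = (\<lambda>_. 0)"
  define f where "f = int (card F)"
  have zc: "is_chain L (i - f) (tl c)" using tl_chain c unfolding f_def by blast
  have zb: "bd L (tl c) = (\<lambda>_. 0)"
  proof
    fix \<tau> show "bd L (tl c) \<tau> = 0"
    proof (cases "\<tau> \<in> L")
      case True
      have "s \<tau> * bd L (tl c) \<tau> = 0" using K[OF True, of c] c by simp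
      then show ?thesis using s_sq[of \<tau>] by (metis mult_eq_0_iff zero_neq_one)
    next
      case False then show ?thesis unfolding bd_e by simp
    qed
  qed
  obtain w where w: "is_chain L (i - f + 1) w" "bd L w = tl c"
    using hL zc zb unfolding hom_vanishes_def f_def by blast
  define P where "P = Phi w"
  have Pc: "is_chain B (i + 1) P" using Phi_chain[OF w(1)] unfolding P_def f_def by simp
  have PS: "F \<subseteq> \<rho> \<Longrightarrow> bd B P \<rho> = c \<rho>" for \<rho>
    unfolding P_def using bdPhi_S[OF w(1) w(2)] c by blast
  define c' where "c' = (\<lambda>\<rho>. c \<rho> - bd B P \<rho>)"
  have c'B: "is_chain B i c'" unfolding c'_def
    using chain_diff c bd_chain[OF finB Pc] by blast
  have c'A: "is_chain A i c'"
  proof (rule chain_restrict[OF c'B])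
    fix \<sigma> assume nz: "c' \<sigma> \<noteq> 0"
    then have "\<sigma> \<in> B" using chain_supp[OF c'B] by blast
    moreover have "\<not> F \<subseteq> \<sigma>" using nz PS unfolding c'_def by auto
    ultimately show "\<sigma> \<in> A" using A_eq by blast
  qed
  have suppc': "c' \<sigma> \<noteq> 0 \<Longrightarrow> \<sigma> \<in> A" for \<sigma> using chain_supp[OF c'A] by blast
  have "bd B c' = (\<lambda>\<rho>. bd B c \<rho> - bd B (bd B P) \<rho>)" unfolding c'_def by (rule bd_diff)
  also have "\<dots> = (\<lambda>_. 0)" using c bdbdB[of P] chain_supp[OF Pc] by simp
  finally have "bd A c' = (\<lambda>_. 0)" using R[OF suppc'] by simp
  then obtain d where d: "is_chain A (i + 1) d" "bd A d = c'"
    using hA c'A unfolding hom_vanishes_def by blast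
  have bdd: "bd B d = c'" using R[of d] chain_supp[OF d(1)] d(2) by simp
  define D where "D = (\<lambda>\<sigma>. d \<sigma> + P \<sigma>)"
  have "is_chain B (i + 1) D" unfolding D_def using chain_add chain_mono[OF AB d(1)] Pc by blast
  moreover have "bd B D = c" unfolding D_def bd_add bdd c'_def by simp
  ultimately show "\<exists>d. is_chain B (i + 1) d \<and> bd B d = c" by blast
qed

lemma H1:
  assumes hB: "hom_vanishes B i" and hL: "hom_vanishes L (i + 1 - int (card F))"
  shows "hom_vanishes A i"
  unfolding hom_vanishes_def
proof (intro allI impI)
  fix c assume c: "is_chain A i c \<and> bd A c = (\<lambda>_. 0)"
  define f where "f = int (card F)"
  have cB: "is_chain B i c" using chain_mono[OF AB] c by blast
  have suppc: "c \<sigma> \<noteq> 0 \<Longrightarrow> \<sigma> \<in> A" for \<sigma> using chain_supp c by blast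
  have "bd B c = (\<lambda>_. 0)" using R[OF suppc] c by simp
  then obtain d where d: "is_chain B (i + 1) d" "bd B d = c"
    using hB cB unfolding hom_vanishes_def by blast
  have zc: "is_chain L (i + 1 - f) (tl d)" using tl_chain d unfolding f_def by blast
  have zb: "bd L (tl d) = (\<lambda>_. 0)"
  proof
    fix \<tau> show "bd L (tl d) \<tau> = 0"
    proof (cases "\<tau> \<in> L")
      case True
      have "F \<union> \<tau> \<notin> A" using A_eq by blast
      then have "c (F \<union> \<tau>) = 0" using suppc by blast
      then have "s \<tau> * bd L (tl d) \<tau> = 0" using K[OF True, of d] d(2) by simp
      then show ?thesis using s_sq[of \<tau>] by (metis mult_eq_0_iff zero_neq_one)
    next
      case False then show ?thesis unfolding bd_e by simp
    qed
  qed
  obtain w where w: "is_chain L (i + 1 - f + 1) w" "bd L w = tl d"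
    using hL zc zb unfolding hom_vanishes_def f_def by blast
  define P where "P = Phi w"
  have Pc: "is_chain B (i + 1 + 1) P" using Phi_chain[OF w(1)] unfolding P_def f_def by simp
  have PS: "F \<subseteq> \<rho> \<Longrightarrow> bd B P \<rho> = d \<rho>" for \<rho>
    unfolding P_def using bdPhi_S[OF w(1) w(2)] d by blast
  define d' where "d' = (\<lambda>\<rho>. d \<rho> - bd B P \<rho>)"
  have d'B: "is_chain B (i + 1) d'" unfolding d'_def
    using chain_diff d bd_chain[OF finB Pc] by blast
  have d'A: "is_chain A (i + 1) d'"
  proof (rule chain_restrict[OF d'B])
    fix \<sigma> assume nz: "d' \<sigma> \<noteq> 0"
    then have "\<sigma> \<in> B" using chain_supp[OF d'B] by blast
    moreover have "\<not> F \<subseteq> \<sigma>" using nz PS unfolding d'_def by auto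
    ultimately show "\<sigma> \<in> A" using A_eq by blast
  qed
  have suppd': "d' \<sigma> \<noteq> 0 \<Longrightarrow> \<sigma> \<in> A" for \<sigma> using chain_supp[OF d'A] by blast
  have "bd B d' = (\<lambda>\<rho>. bd B d \<rho> - bd B (bd B P) \<rho>)" unfolding d'_def by (rule bd_diff)
  also have "\<dots> = c" using d(2) bdbdB[of P] chain_supp[OF Pc] by simp
  finally have "bd A d' = c" using R[OF suppd'] by simp
  then show "\<exists>d. is_chain A (i + 1) d \<and> bd A d = c" using d'A by blast
qed

end

lemma hyp_finite: "hypergraph V C \<Longrightarrow> finite C"
proof -
  assume h: "hypergraph V C"
  then have "C \<subseteq> Pow V" "finite V" unfolding hypergraph_def by auto
  then show "finite C" by (meson finite_Pow_iff finite_subset)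
qed

lemma hyp_edge: "hypergraph V C \<Longrightarrow> E \<in> C \<Longrightarrow> E \<subseteq> V \<and> card E \<ge> 2 \<and> finite E"
  unfolding hypergraph_def by (meson finite_subset)

lemma hyp_antichain: "hypergraph V C \<Longrightarrow> E \<in> C \<Longrightarrow> E' \<in> C \<Longrightarrow> E \<subseteq> E' \<Longrightarrow> E = E'"
  unfolding hypergraph_def by blast

lemma nbhd_iff: "v \<in> nbhd C F \<longleftrightarrow> (\<exists>E\<in>C. E - F = {v})"
proof
  assume "v \<in> nbhd C F"
  then obtain S where S: "S \<in> {E - F | E. E \<in> C \<and> card (E - F) = 1}" "v \<in> S" unfolding nbhd_def by (rule UnionE)
  then obtain E where E0: "S = E - F" "E \<in> C" "card (E - F) = 1" by blast
  obtain w where w: "E - F = {w}" using E0(3) by (rule card_1_singletonE)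
  have "v \<in> {w}" using S(2) E0(1) w by blast
  then have "w = v" by blast
  then show "\<exists>E\<in>C. E - F = {v}" using E0(2) w by blast
next
  assume "\<exists>E\<in>C. E - F = {v}"
  then obtain E where E: "E \<in> C" "E - F = {v}" by blast
  have "card (E - F) = 1" unfolding E(2) by simp
  then have "E - F \<in> {E - F | E. E \<in> C \<and> card (E - F) = 1}" using E(1) by blast
  moreover have "v \<in> E - F" using E by blast
  ultimately show "v \<in> nbhd C F" unfolding nbhd_def by (rule UnionI)
qed

lemma colon_E_iff: "G \<in> colon_E C F \<longleftrightarrow>
   (\<exists>E\<in>C - {F}. G = E - F) \<and> \<not> (\<exists>E\<in>C - {F}. E - F \<subset> G) \<and> card G \<ge> 2"
  unfolding colon_E_def Let_def by blast

lemma min_exists: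
  assumes fin: "\<forall>H\<in>M. finite H" and XM: "X \<in> M"
  shows "\<exists>H\<in>M. H \<subseteq> X \<and> \<not> (\<exists>H'\<in>M. H' \<subset> H)"
  using XM
proof (induction "card X" arbitrary: X rule: less_induct)
  case less
  show ?case
  proof (cases "\<exists>H'\<in>M. H' \<subset> X")
    case False
    have "X \<subseteq> X" by simp
    then show ?thesis using less.prems False by blast
  next
    case True
    then obtain H' where H': "H' \<in> M" "H' \<subset> X" by blast
    have fX: "finite X" using fin less.prems by blast
    have "card H' < card X" using psubset_card_mono[OF fX H'(2)] .
    then have "\<exists>H\<in>M. H \<subseteq> H' \<and> \<not> (\<exists>H''\<in>M. H'' \<subset> H)" using less.hyps H'(1) by blast
    then obtain H where H: "H \<in> M" "H \<subseteq> H'" "\<not> (\<exists>H''\<in>M. H'' \<subset> H)" by blast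
    have "H \<subseteq> X" using H(2) H'(2) by blast
    then show ?thesis using H by blast
  qed
qed

lemma hyp_minus: "hypergraph V C \<Longrightarrow> hypergraph V (C - {F})"
  unfolding hypergraph_def by blast

lemma colon_E_D: "G \<in> colon_E C F \<Longrightarrow> \<exists>E. E \<in> C \<and> E \<noteq> F \<and> G = E - F"
  unfolding colon_E_iff by blast
lemma colon_E_min: "G \<in> colon_E C F \<Longrightarrow> E \<in> C \<Longrightarrow> E \<noteq> F \<Longrightarrow> \<not> (E - F \<subset> G)"
  unfolding colon_E_iff by blast
lemma colon_E_card2: "G \<in> colon_E C F \<Longrightarrow> 2 \<le> card G"
  unfolding colon_E_iff by blast
lemma colon_E_I: "E \<in> C \<Longrightarrow> E \<noteq> F \<Longrightarrow> (\<And>E'. E' \<in> C \<Longrightarrow> E' \<noteq> F \<Longrightarrow> \<not> (E' - F \<subset> E - F)) \<Longrightarrow> 2 \<le> card (E - F)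
   \<Longrightarrow> E - F \<in> colon_E C F"
  unfolding colon_E_iff by blast

lemma char_Ind:
  assumes hyp: "hypergraph V C" and FC: "F \<in> C" and td: "\<tau> \<inter> F = {}"
  shows "F \<union> \<tau> \<in> Ind V (C - {F}) \<longleftrightarrow> \<tau> \<in> Ind (colon_V V C F) (colon_E C F)"
proof
  assume h: "F \<union> \<tau> \<in> Ind V (C - {F})"
  have sub: "F \<union> \<tau> \<subseteq> V" using h unfolding Ind_def by blast
  have no: "\<And>E. E \<in> C \<Longrightarrow> E \<noteq> F \<Longrightarrow> \<not> E \<subseteq> F \<union> \<tau>" using h unfolding Ind_def by blast
  have "\<tau> \<subseteq> colon_V V C F"
  proof
    fix v assume v: "v \<in> \<tau>"
    have "v \<notin> nbhd C F"
    proof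
      assume "v \<in> nbhd C F"
      then obtain E where E: "E \<in> C" "E - F = {v}" unfolding nbhd_iff by (elim bexE)
      have "E \<noteq> F" using E(2) by blast
      moreover have "E \<subseteq> F \<union> \<tau>"
      proof -
        have "E - F \<subseteq> \<tau>" using E(2) v by simp
        then show ?thesis by (simp only: Diff_subset_conv)
      qed
      ultimately show False using no E(1) by blast
    qed
    moreover have "v \<in> V" "v \<notin> F" using v sub td by blast+
    ultimately show "v \<in> colon_V V C F" unfolding colon_V_def by blast
  qed
  moreover have "\<not> (\<exists>G\<in>colon_E C F. G \<subseteq> \<tau>)"
  proof
    assume "\<exists>G\<in>colon_E C F. G \<subseteq> \<tau>"
    then obtain G where G: "G \<in> colon_E C F" "G \<subseteq> \<tau>" by blast
    obtain E where E: "E \<in> C" "E \<noteq> F" "G = E - F" using colon_E_D[OF G(1)] by blast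
    have "E \<subseteq> F \<union> \<tau>" using E(3) G(2) by blast
    then show False using no E(1,2) by blast
  qed
  ultimately show "\<tau> \<in> Ind (colon_V V C F) (colon_E C F)" unfolding Ind_def by blast
next
  assume h: "\<tau> \<in> Ind (colon_V V C F) (colon_E C F)"
  have sub: "\<tau> \<subseteq> colon_V V C F" using h unfolding Ind_def by blast
  have no: "\<And>G. G \<in> colon_E C F \<Longrightarrow> \<not> G \<subseteq> \<tau>" using h unfolding Ind_def by blast
  have FV: "F \<subseteq> V" using hyp_edge[OF hyp FC] by blast
  have tV: "\<tau> \<subseteq> V" using sub unfolding colon_V_def by blast
  have noE: "\<not> (\<exists>E\<in>C - {F}. E \<subseteq> F \<union> \<tau>)"
  proof
    assume "\<exists>E\<in>C - {F}. E \<subseteq> F \<union> \<tau>"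
    then obtain E where E: "E \<in> C" "E \<noteq> F" "E \<subseteq> F \<union> \<tau>" by blast
    define M where "M = {E - F | E. E \<in> C \<and> E \<noteq> F}"
    have finM: "\<forall>H\<in>M. finite H"
    proof
      fix H assume "H \<in> M"
      then obtain E' where "E' \<in> C" "H = E' - F" unfolding M_def by blast
      then show "finite H" using hyp_edge[OF hyp] by blast
    qed
    have "E - F \<in> M" unfolding M_def using E(1,2) by blast
    then obtain H where H: "H \<in> M" "H \<subseteq> E - F" "\<not> (\<exists>H'\<in>M. H' \<subset> H)" using min_exists[OF finM] by blast
    obtain E' where E': "E' \<in> C" "E' \<noteq> F" "H = E' - F" using H(1) unfolding M_def by blast
    have Ht: "H \<subseteq> \<tau>" using H(2) E(3) by blast
    have fH: "finite H" using finM H(1) by blast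
    consider "card H \<ge> 2" | "card H = 1" | "card H = 0" by linarith
    then show False
    proof cases
      case 1
      have mn: "\<And>E''. E'' \<in> C \<Longrightarrow> E'' \<noteq> F \<Longrightarrow> \<not> (E'' - F \<subset> E' - F)"
      proof
        fix E'' assume "E'' \<in> C" "E'' \<noteq> F" "E'' - F \<subset> E' - F"
        moreover have "E'' - F \<in> M" unfolding M_def using calculation(1,2) by blast
        ultimately show False using H(3) E'(3) by blast
      qed
      have "E' - F \<in> colon_E C F" using colon_E_I[OF E'(1) E'(2) mn] 1 E'(3) by blast
      then show False using no Ht E'(3) by blast
    next
      case 2
      then obtain v where v: "H = {v}" by (rule card_1_singletonE)
      then have "v \<in> nbhd C F" unfolding nbhd_iff using E'(1) E'(3) by (intro bexI[of _ E']) simp_all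
      moreover have "v \<in> \<tau>" using Ht v by blast
      ultimately show False using sub unfolding colon_V_def by blast
    next
      case 3
      then have "H = {}" using fH by simp
      then have "E' \<subseteq> F" using E'(3) by blast
      then have "E' = F" using hyp_antichain[OF hyp E'(1) FC] by blast
      then show False using E'(2) by blast
    qed
  qed
  have "F \<union> \<tau> \<subseteq> V" using FV tV by blast
  then show "F \<union> \<tau> \<in> Ind V (C - {F})" using noE unfolding Ind_def by blast
qed

lemma hyp_colon:
  assumes hyp: "hypergraph V C" and FC: "F \<in> C"
  shows "hypergraph (colon_V V C F) (colon_E C F)"
  unfolding hypergraph_def
proof (intro conjI ballI impI)
  show "finite (colon_V V C F)" using hyp unfolding hypergraph_def colon_V_def by blast
next
  fix G assume G: "G \<in> colon_E C F"
  obtain E where E: "E \<in> C" "E \<noteq> F" "G = E - F" using colon_E_D[OF G] by blast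
  have c2: "card G \<ge> 2" using colon_E_card2[OF G] .
  show "card G \<ge> 2" by (rule c2)
  have "G \<inter> nbhd C F = {}"
  proof (rule ccontr)
    assume "G \<inter> nbhd C F \<noteq> {}"
    then obtain v where v: "v \<in> G" "v \<in> nbhd C F" by blast
    then obtain E' where E': "E' \<in> C" "E' - F = {v}" unfolding nbhd_iff by (elim bexE)
    have "E' \<noteq> F" using E'(2) by blast
    moreover have "{v} \<subset> G"
    proof -
      have "{v} \<subseteq> G" using v by blast
      moreover have "{v} \<noteq> G"
      proof
        assume vG: "{v} = G"
        have "card G = 1" unfolding vG[symmetric] by simp
        then show False using c2 by linarith
      qed
      ultimately show ?thesis by blast
    qed
    ultimately show False using colon_E_min[OF G E'(1)] E'(2) by metis
  qed
  moreover have "E \<subseteq> V" using hyp_edge[OF hyp E(1)] by blast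
  ultimately show "G \<subseteq> colon_V V C F" using E(3) unfolding colon_V_def by blast
next
  fix G G' assume G: "G \<in> colon_E C F" and G': "G' \<in> colon_E C F" and sub: "G \<subseteq> G'"
  show "G = G'"
  proof (rule ccontr)
    assume "G \<noteq> G'"
    then have ps: "G \<subset> G'" using sub by blast
    obtain E where E: "E \<in> C" "E \<noteq> F" "G = E - F" using colon_E_D[OF G] by blast
    show False using colon_E_min[OF G' E(1) E(2)] ps E(3) by blast
  qed
qed

lemma colon_E_card:
  assumes fC: "finite C" and FC: "F \<in> C"
  shows "card (colon_E C F) < card C" "finite (colon_E C F)"
proof -
  have sub: "colon_E C F \<subseteq> (\<lambda>E. E - F) ` (C - {F})"
  proof
    fix G assume "G \<in> colon_E C F"
    then obtain E where "E \<in> C" "E \<noteq> F" "G = E - F" using colon_E_D by blast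
    then show "G \<in> (\<lambda>E. E - F) ` (C - {F})" by blast
  qed
  have fI: "finite ((\<lambda>E. E - F) ` (C - {F}))" using fC by blast
  show "finite (colon_E C F)" using finite_subset[OF sub fI] .
  have "card (colon_E C F) \<le> card ((\<lambda>E. E - F) ` (C - {F}))" using card_mono[OF fI sub] .
  also have "\<dots> \<le> card (C - {F})" using card_image_le fC by blast
  also have "\<dots> < card C" using card_Diff1_less[OF fC FC] .
  finally show "card (colon_E C F) < card C" .
qed

lemma splitting_Ind:
  assumes hyp: "hypergraph V C" and FC: "F \<in> C"
  shows "splitting (Ind V C) (Ind V (C - {F})) (Ind (colon_V V C F) (colon_E C F)) F V (colon_V V C F)"
proof
  show "finite V" using hyp unfolding hypergraph_def by blast
  show "F \<subseteq> V" using hyp_edge[OF hyp FC] by blast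
  show "\<Union> (Ind V (C - {F})) \<subseteq> V" unfolding Ind_def by blast
  show "\<Union> (Ind (colon_V V C F) (colon_E C F)) \<subseteq> colon_V V C F" unfolding Ind_def by blast
  show "colon_V V C F \<subseteq> V - F" unfolding colon_V_def by blast
  show "Ind V C = {\<sigma> \<in> Ind V (C - {F}). \<not> F \<subseteq> \<sigma>}" unfolding Ind_def using FC by blast
  show "downclosed (Ind V (C - {F}))" unfolding downclosed_def Ind_def by blast
  fix \<tau> :: "'a set" assume "\<tau> \<inter> F = {}"
  then show "F \<union> \<tau> \<in> Ind V (C - {F}) \<longleftrightarrow> \<tau> \<in> Ind (colon_V V C F) (colon_E C F)"
    by (rule char_Ind[OF hyp FC])
qed

lemma card_minus_le: "finite C \<Longrightarrow> F \<in> C \<Longrightarrow> card C \<le> Suc n \<Longrightarrow> card (C - {F}) \<le> n"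
  by (simp add: card_Diff_singleton)

lemma psi_aux_stable:
  "finite C \<Longrightarrow> card C \<le> n \<Longrightarrow> card C \<le> m \<Longrightarrow> psi_aux n V C = psi_aux m V C"
proof (induction n arbitrary: m V C)
  case 0
  then have "C = {}" by simp
  then show ?case by (cases m) simp_all
next
  case (Suc n)
  show ?case
  proof (cases m)
    case 0
    then have "C = {}" using Suc.prems by simp
    then show ?thesis using 0 by simp
  next
    case (Suc m')
    have eq: "(\<lambda>F. min (psi_aux n V (C - {F})) (psi_aux n (colon_V V C F) (colon_E C F) + ereal (real (card F) - 1))) ` C
      = (\<lambda>F. min (psi_aux m' V (C - {F})) (psi_aux m' (colon_V V C F) (colon_E C F) + ereal (real (card F) - 1))) ` C"
    proof (rule image_cong[OF refl])
      fix F assume FC: "F \<in> C"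
      have c1: "card (C - {F}) \<le> n" "card (C - {F}) \<le> m'"
        using card_minus_le[OF Suc.prems(1) FC] Suc.prems \<open>m = Suc m'\<close> by auto
      have fc: "finite (colon_E C F)" "card (colon_E C F) < card C" using colon_E_card[OF Suc.prems(1) FC] by auto
      have c2: "card (colon_E C F) \<le> n" "card (colon_E C F) \<le> m'"
        using fc(2) Suc.prems \<open>m = Suc m'\<close> by auto
      have "psi_aux n V (C - {F}) = psi_aux m' V (C - {F})"
        using Suc.IH[of "C - {F}" m' V] Suc.prems(1) c1 by simp
      moreover have "psi_aux n (colon_V V C F) (colon_E C F) = psi_aux m' (colon_V V C F) (colon_E C F)"
        using Suc.IH[OF fc(1) c2] .
      ultimately show "min (psi_aux n V (C - {F})) (psi_aux n (colon_V V C F) (colon_E C F) + ereal (real (card F) - 1))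
        = min (psi_aux m' V (C - {F})) (psi_aux m' (colon_V V C F) (colon_E C F) + ereal (real (card F) - 1))" by simp
    qed
    show ?thesis unfolding Suc psi_aux.simps eq by simp
  qed
qed

lemma psi_rec:
  assumes fC: "finite C"
  shows "psi V C = (if V = {} then 0 else if C = {} then \<infinity> else
     Max ((\<lambda>F. min (psi V (C - {F})) (psi (colon_V V C F) (colon_E C F) + ereal (real (card F) - 1))) ` C))"
proof (cases "C = {}")
  case True
  then show ?thesis unfolding psi_def by simp
next
  case False
  then obtain n where n: "card C = Suc n" using fC by (metis card_0_eq not0_implies_Suc)
  have eq: "(\<lambda>F. min (psi_aux n V (C - {F})) (psi_aux n (colon_V V C F) (colon_E C F) + ereal (real (card F) - 1))) ` C
      = (\<lambda>F. min (psi V (C - {F})) (psi (colon_V V C F) (colon_E C F) + ereal (real (card F) - 1))) ` C"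
  proof (rule image_cong[OF refl])
    fix F assume FC: "F \<in> C"
    have c1: "card (C - {F}) \<le> n" using card_minus_le[OF fC FC] n by simp
    have fc: "finite (colon_E C F)" "card (colon_E C F) < card C" using colon_E_card[OF fC FC] by auto
    have c2: "card (colon_E C F) \<le> n" using fc(2) n by simp
    have "psi_aux n V (C - {F}) = psi V (C - {F})"
      unfolding psi_def using psi_aux_stable[of "C - {F}" n "card (C - {F})" V] fC c1 by simp
    moreover have "psi_aux n (colon_V V C F) (colon_E C F) = psi (colon_V V C F) (colon_E C F)"
      unfolding psi_def using psi_aux_stable[OF fc(1) c2, of "card (colon_E C F)"] by simp
    ultimately show "min (psi_aux n V (C - {F})) (psi_aux n (colon_V V C F) (colon_E C F) + ereal (real (card F) - 1))
        = min (psi V (C - {F})) (psi (colon_V V C F) (colon_E C F) + ereal (real (card F) - 1))" by simp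
  qed
  show ?thesis unfolding psi_def n psi_aux.simps eq[unfolded psi_def] using False by simp
qed

lemma conn_ge_rev:
  assumes "\<forall>j\<le>i. hom_vanishes \<Delta> j"
  shows "ereal (real_of_int i) \<le> conn_h \<Delta>"
proof (cases "\<forall>j. hom_vanishes \<Delta> j")
  case True
  then have "conn_h \<Delta> = \<infinity>" by (rule conn_inf)
  then show ?thesis by simp
next
  case False
  then obtain j0 where "\<not> hom_vanishes \<Delta> j0" by blast
  then obtain m where m: "conn_h \<Delta> = ereal (real_of_int m)" "\<not> hom_vanishes \<Delta> (m + 1)"
    using conn_lt by blast
  have "\<not> (m + 1 \<le> i)" using assms m(2) by blast
  then show ?thesis using m(1) by simp
qed

lemma not_vanish_above:
  assumes "conn_h \<Delta> = ereal (real_of_int k)"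
  shows "\<not> hom_vanishes \<Delta> (k + 1)"
proof
  assume h: "hom_vanishes \<Delta> (k + 1)"
  have "\<forall>j\<le>k + 1. hom_vanishes \<Delta> j"
  proof (intro allI impI)
    fix j assume "j \<le> k + 1"
    then have "j \<le> k \<or> j = k + 1" by linarith
    then show "hom_vanishes \<Delta> j" using h conn_ge[of k \<Delta>] assms by auto
  qed
  then have "ereal (real_of_int (k + 1)) \<le> conn_h \<Delta>" by (rule conn_ge_rev)
  then show False using assms by simp
qed

lemma conn_point: "conn_h {{}::'a::linorder set} = ereal (-2)"
proof -
  define c :: "'a set \<Rightarrow> int" where "c = (\<lambda>\<sigma>. if \<sigma> = {} then 1 else 0)"
  have ch: "is_chain {{}} (-1) c" unfolding is_chain_def c_def by simp
  have bc: "bd {{}} c = (\<lambda>_. 0)" unfolding bd_e by (simp add: fun_eq_iff)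
  have "\<not> hom_vanishes {{}::'a set} (-2 + 1)"
  proof
    assume "hom_vanishes {{}::'a set} (-2 + 1)"
    then obtain d where "bd {{}} d = c" using ch bc unfolding hom_vanishes_def by force
    then have "bd {{}} d {} = 1" unfolding c_def by (simp add: fun_eq_iff)
    then show False unfolding bd_e by simp
  qed
  moreover have "\<forall>j\<le>-2. hom_vanishes {{}::'a set} j" using vanish_low by blast
  ultimately show ?thesis using conn_eq[of "-2"] by simp
qed

lemma conn_simplex:
  assumes "finite V" "V \<noteq> {}"
  shows "conn_h {S. S \<subseteq> V} = \<infinity>"
proof -
  obtain v where "v \<in> V" using assms(2) by blast
  then show ?thesis using simplex_vanishes[OF assms(1)] conn_inf by blast
qed

context splitting
begin

lemma ineqA: "min (conn_h B + 2) (conn_h L + 2 + ereal (real (card F) - 1)) \<le> conn_h A + 2"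
proof (cases "conn_h A = \<infinity>")
  case True then show ?thesis by simp
next
  case False
  then obtain k where k: "conn_h A = ereal (real_of_int k)" using conn_cases by blast
  have nA: "\<not> hom_vanishes A (k + 1)" using not_vanish_above[OF k] .
  have "\<not> hom_vanishes B (k + 1) \<or> \<not> hom_vanishes L (k + 1 + 1 - int (card F))"
    using H1 nA by blast
  then show ?thesis
  proof
    assume "\<not> hom_vanishes B (k + 1)"
    then obtain m where m: "conn_h B = ereal (real_of_int m)" "m < k + 1" using conn_lt by blast
    have "conn_h B + 2 \<le> conn_h A + 2" using m k by simp
    then show ?thesis by (meson min.cobounded1 order_trans)
  next
    assume "\<not> hom_vanishes L (k + 1 + 1 - int (card F))"
    then obtain p where p: "conn_h L = ereal (real_of_int p)" "p < k + 1 + 1 - int (card F)" using conn_lt by blast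
    have "real_of_int p + 2 + (real (card F) - 1) \<le> real_of_int k + 2" using p(2) by linarith
    then have "conn_h L + 2 + ereal (real (card F) - 1) \<le> conn_h A + 2" using p(1) k by simp
    then show ?thesis by (meson min.cobounded2 order_trans)
  qed
qed

lemma ineqB:
  assumes cond: "conn_h L \<ge> conn_h A - ereal (real (card F)) + 1"
  shows "conn_h A + 2 \<le> min (conn_h B + 2) (conn_h L + 2 + ereal (real (card F) - 1))"
proof -
  have AB: "conn_h A \<le> conn_h B"
  proof (cases "conn_h B = \<infinity>")
    case True then show ?thesis by simp
  next
    case False
    then obtain m where m: "conn_h B = ereal (real_of_int m)" using conn_cases by blast
    have nB: "\<not> hom_vanishes B (m + 1)" using not_vanish_above[OF m] .
    have "\<not> hom_vanishes A (m + 1) \<or> \<not> hom_vanishes L (m + 1 - int (card F))"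
      using H2 nB by blast
    then show ?thesis
    proof
      assume "\<not> hom_vanishes A (m + 1)"
      then obtain k where k: "conn_h A = ereal (real_of_int k)" "k < m + 1" using conn_lt by blast
      then show ?thesis using m by simp
    next
      assume "\<not> hom_vanishes L (m + 1 - int (card F))"
      then obtain p where p: "conn_h L = ereal (real_of_int p)" "p < m + 1 - int (card F)" using conn_lt by blast
      show ?thesis
      proof (cases "conn_h A = \<infinity>")
        case True then show ?thesis using cond p(1) by simp
      next
        case False
        then obtain k where k: "conn_h A = ereal (real_of_int k)" using conn_cases by blast
        then have "real_of_int k - real (card F) + 1 \<le> real_of_int p" using cond p(1) by simp
        then have "k \<le> m" using p(2) by linarith
        then show ?thesis using k m by simp
      qed
    qed
  qed
  have AL: "conn_h A + 2 \<le> conn_h L + 2 + ereal (real (card F) - 1)"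
  proof (cases "conn_h A = \<infinity>")
    case True
    then have "conn_h L = \<infinity>" using cond by simp
    then show ?thesis by simp
  next
    case False
    then obtain k where k: "conn_h A = ereal (real_of_int k)" using conn_cases by blast
    show ?thesis
    proof (cases "conn_h L = \<infinity>")
      case True then show ?thesis by simp
    next
      case False
      then obtain p where p: "conn_h L = ereal (real_of_int p)" using conn_cases by blast
      then have "real_of_int k - real (card F) + 1 \<le> real_of_int p" using cond k by simp
      then show ?thesis using k p by simp
    qed
  qed
  have "conn_h A + 2 \<le> conn_h B + 2" using AB by (rule add_right_mono)
  then show ?thesis using AL by simp
qed

end

lemma Ind_empty_V: "hypergraph {} C \<Longrightarrow> C = {}"
proof (rule ccontr)
  assume h: "hypergraph {} C" and "C \<noteq> {}"
  then obtain E where E: "E \<in> C" by blast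
  then have "E \<subseteq> {}" "card E \<ge> 2" using hyp_edge[OF h E] by blast+
  then show False by simp
qed

lemma thmA: "hypergraph V C \<Longrightarrow> psi V C \<le> conn_h (Ind V C) + 2"
proof (induction "card C" arbitrary: V C rule: less_induct)
  case less
  have fC: "finite C" using hyp_finite[OF less.prems] .
  have fV: "finite V" using less.prems unfolding hypergraph_def by blast
  show ?case
  proof (cases "V = {}")
    case True
    then have C0: "C = {}" using Ind_empty_V less.prems by blast
    have I: "Ind V C = {{}}" unfolding Ind_def True C0 by auto
    have "conn_h (Ind V C) = ereal (-2)" unfolding I by (rule conn_point)
    then show ?thesis using psi_rec[OF fC] True by simp
  next
    case Vne: False
    show ?thesis
    proof (cases "C = {}")
      case True
      have "Ind V C = {S. S \<subseteq> V}" unfolding Ind_def True by simp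
      then show ?thesis using conn_simplex[OF fV Vne] by simp
    next
      case Cne: False
      have "Max ((\<lambda>F. min (psi V (C - {F})) (psi (colon_V V C F) (colon_E C F) + ereal (real (card F) - 1))) ` C)
          \<le> conn_h (Ind V C) + 2"
      proof (subst Max_le_iff, simp add: fC, simp add: Cne, intro ballI)
        fix x assume "x \<in> (\<lambda>F. min (psi V (C - {F})) (psi (colon_V V C F) (colon_E C F) + ereal (real (card F) - 1))) ` C"
        then obtain F where FC: "F \<in> C" and x: "x = min (psi V (C - {F})) (psi (colon_V V C F) (colon_E C F) + ereal (real (card F) - 1))"
          by blast
        interpret sp: splitting "Ind V C" "Ind V (C - {F})" "Ind (colon_V V C F) (colon_E C F)" F V "colon_V V C F"
          by (rule splitting_Ind[OF less.prems FC])
        have IH1: "psi V (C - {F}) \<le> conn_h (Ind V (C - {F})) + 2"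
          using less.hyps[of "C - {F}" V] hyp_minus[OF less.prems] card_Diff1_less[OF fC FC] by blast
        have IH2: "psi (colon_V V C F) (colon_E C F) \<le> conn_h (Ind (colon_V V C F) (colon_E C F)) + 2"
          using less.hyps[of "colon_E C F" "colon_V V C F"] hyp_colon[OF less.prems FC] colon_E_card[OF fC FC] by blast
        have "x \<le> min (conn_h (Ind V (C - {F})) + 2) (conn_h (Ind (colon_V V C F) (colon_E C F)) + 2 + ereal (real (card F) - 1))"
          unfolding x by (intro min.mono IH1 add_right_mono IH2)
        also have "\<dots> \<le> conn_h (Ind V C) + 2" by (rule sp.ineqA)
        finally show "x \<le> conn_h (Ind V C) + 2" .
      qed
      then show ?thesis using psi_rec[OF fC] Vne Cne by simp
    qed
  qed
qed

lemma thmB: "properly_splitted V C \<Longrightarrow> hypergraph V C \<Longrightarrow> conn_h (Ind V C) + 2 \<le> psi V C"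
proof (induction rule: properly_splitted.induct)
  case (empty V)
  have fV: "finite V" using empty unfolding hypergraph_def by blast
  show ?case
  proof (cases "V = {}")
    case True
    have I: "Ind V {} = {{}}" unfolding Ind_def True by auto
    have "conn_h (Ind V {}) = ereal (-2)" unfolding I by (rule conn_point)
    then show ?thesis using psi_rec[of "{}" V] True by simp
  next
    case False
    then show ?thesis using psi_rec[of "{}" V] by simp
  qed
next
  case (split F C V)
  have hyp: "hypergraph V C" using split.prems .
  have fC: "finite C" using hyp_finite[OF hyp] .
  have Cne: "C \<noteq> {}" using split.hyps(1) by blast
  have Vne: "V \<noteq> {}"
  proof
    assume "V = {}"
    then have "C = {}" using Ind_empty_V hyp by blast
    then show False using Cne by blast
  qed
  interpret sp: splitting "Ind V C" "Ind V (C - {F})" "Ind (colon_V V C F) (colon_E C F)" F V "colon_V V C F"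
    by (rule splitting_Ind[OF hyp split.hyps(1)])
  have IH1: "conn_h (Ind V (C - {F})) + 2 \<le> psi V (C - {F})" using split.IH(1) hyp_minus[OF hyp] by blast
  have IH2: "conn_h (Ind (colon_V V C F) (colon_E C F)) + 2 \<le> psi (colon_V V C F) (colon_E C F)"
    using split.IH(2) hyp_colon[OF hyp split.hyps(1)] by blast
  have "conn_h (Ind V C) + 2 \<le> min (conn_h (Ind V (C - {F})) + 2) (conn_h (Ind (colon_V V C F) (colon_E C F)) + 2 + ereal (real (card F) - 1))"
    by (rule sp.ineqB[OF split.hyps(2)])
  also have "\<dots> \<le> min (psi V (C - {F})) (psi (colon_V V C F) (colon_E C F) + ereal (real (card F) - 1))"
    by (intro min.mono IH1 add_right_mono IH2)
  also have "\<dots> \<le> Max ((\<lambda>F. min (psi V (C - {F})) (psi (colon_V V C F) (colon_E C F) + ereal (real (card F) - 1))) ` C)"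
    using fC split.hyps(1) by (intro Max_ge) auto
  also have "\<dots> = psi V C" using psi_rec[OF fC] Vne Cne by simp
  finally show ?case .
qed

theorem theorem3p15:
  fixes V :: "'a::linorder set" and C :: "'a set set"
  assumes "hypergraph V C"
    and "properly_splitted V C"
  shows "psi V C = conn_h (Ind V C) + 2"
  using thmA[OF assms(1)] thmB[OF assms(2,1)] by (rule antisym)

end
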